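(* Let $h\ge 1$ be an integer and let $O$ be a finite set of next hops with $\delta=|O|$ and probability distribution $(p_o)_{o\in O}$. Let $T$ be the complete binary trie of height $h$ whose $2^h$ leaves are labeled independently, each leaf receiving next hop $o$ with probability $p_o$. Let $D$ be the DAG obtained from $T$ by trie-folding, and for $1\le j\le h$ let $V^j_D$ be the set of nodes of $D$ at level $j$. Then for every $1\le j\le h$, \[E(|V^j_D|) \leq \min\left\{\frac{H_O}{h-j} 2^{h} + 3,\ 2^{h-j},\ \delta^{2^j} \right\},\] where $H_O=\sum_{o\in O} p_o\log_2\frac{1}{p_o}$, and the first term is interpreted as $+\infty$ when $j=h$.
   Context: Levels: the level of a node of $T$ is $h$ minus its distance (number of edges) from the root, so the root has level $h$, the leaves have level $0$, and level $j$ contains $2^{h-j}$ nodes, each being the root of a subtrie of height $j$ with $2^j$ labeled leaves. Trie-folding: two nodes of $T$ are merged whenever the subtries rooted at them are identical, i.e. have the same structure and the same sequence of next-hop labels at their leaves; the result is a DAG $D$ in which each distinct labeled subtrie is represented once. Thus the nodes of $D$ at level $j$ correspond to the distinct leaf-label strings of length $2^j$ occurring among the $2^{h-j}$ subtries rooted at level $j$. Terms with $p_o=0$ contribute $0$ to $H_O$. *)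

theory Defs
  imports Complex_Main "HOL-Library.FuncSet"
begin

text \<open>A labeling of the 2^h leaves (indexed 0..2^h-1, left to right) of the complete
binary trie of height h by next hops.  The subtrie rooted at the m-th node of level j
(m < 2^(h-j)) has leaf-label string lbl[m*2^j ..< (m+1)*2^j].  After trie-folding, the
nodes of D at level j correspond to the distinct such strings.\<close>

definition subtrie_string :: "nat \<Rightarrow> (nat \<Rightarrow> 'a) \<Rightarrow> nat \<Rightarrow> 'a list" where
  "subtrie_string j lbl m = map lbl [m * 2^j ..< (m + 1) * 2^j]"

definition folded_level_nodes :: "nat \<Rightarrow> nat \<Rightarrow> (nat \<Rightarrow> 'a) \<Rightarrow> 'a list set" where
  "folded_level_nodes h j lbl = subtrie_string j lbl ` {..< 2^(h - j)}"

definition labeling_prob :: "nat \<Rightarrow> ('a \<Rightarrow> real) \<Rightarrow> (nat \<Rightarrow> 'a) \<Rightarrow> real" where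
  "labeling_prob h p lbl = (\<Prod>i<2^h. p (lbl i))"

definition expected_level_nodes :: "nat \<Rightarrow> nat \<Rightarrow> 'a set \<Rightarrow> ('a \<Rightarrow> real) \<Rightarrow> real" where
  "expected_level_nodes h j Hops p =
     (\<Sum>lbl \<in> ({..<2^h} \<rightarrow>\<^sub>E Hops). labeling_prob h p lbl * real (card (folded_level_nodes h j lbl)))"

definition entropy :: "'a set \<Rightarrow> ('a \<Rightarrow> real) \<Rightarrow> real" where
  "entropy Hops p = (\<Sum>x\<in>Hops. if p x = 0 then 0 else p x * log 2 (1 / p x))"

end

theory Submission
  imports Defs "HOL-Analysis.Analysis"
begin


lemma ind_prod:
  assumes "finite J"
  shows "(if \<forall>i\<in>J. f i = g i then 1 else (0::real)) = (\<Prod>i\<in>J. if f i = g i then 1 else 0)"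
proof (cases "\<forall>i\<in>J. f i = g i")
  case True then show ?thesis by simp
next
  case False
  then obtain i where "i \<in> J" "f i \<noteq> g i" by auto
  then show ?thesis using assms False by (simp add: prod_zero_iff)
qed

lemma prod_if_subset:
  assumes "finite I" "J \<subseteq> I"
  shows "(\<Prod>i\<in>I. if i \<in> J then h i else 1) = (\<Prod>i\<in>J. h i)"
proof -
  have "I \<inter> {x. x \<in> J} = J" using assms by auto
  then show ?thesis using assms by (simp add: prod.If_cases)
qed

lemma sum_PiE_prob:
  assumes "finite I" "finite A" "(\<Sum>a\<in>A. p a) = (1::real)"
  shows "(\<Sum>f\<in>I \<rightarrow>\<^sub>E A. \<Prod>i\<in>I. p (f i)) = 1"
  using prod_sum_PiE[of I "\<lambda>_. A" "\<lambda>_ a. p a"] assms by simp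

lemma marginal:
  assumes "finite I" "J \<subseteq> I" "g ` J \<subseteq> A" "finite A" "(\<Sum>a\<in>A. p a) = (1::real)"
  shows "(\<Sum>f\<in>I \<rightarrow>\<^sub>E A. (\<Prod>i\<in>I. p (f i)) * (if \<forall>i\<in>J. f i = g i then 1 else 0))
         = (\<Prod>i\<in>J. p (g i))"
proof -
  have fJ: "finite J" using assms finite_subset by blast
  have "\<And>f. (\<Prod>i\<in>I. p (f i)) * (if \<forall>i\<in>J. f i = g i then 1 else 0)
      = (\<Prod>i\<in>I. p (f i) * (if i \<in> J then (if f i = g i then 1 else 0) else 1))"
  proof -
    fix f
    have "(\<Prod>i\<in>I. (if i \<in> J then (if f i = g i then 1 else 0) else (1::real)))
        = (\<Prod>i\<in>J. if f i = g i then 1 else 0)"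
      by (rule prod_if_subset[OF assms(1,2)])
    then show "?thesis f" using ind_prod[OF fJ, of f g] by (simp add: prod.distrib)
  qed
  then have "(\<Sum>f\<in>I \<rightarrow>\<^sub>E A. (\<Prod>i\<in>I. p (f i)) * (if \<forall>i\<in>J. f i = g i then 1 else 0))
     = (\<Sum>f\<in>I \<rightarrow>\<^sub>E A. \<Prod>i\<in>I. p (f i) * (if i \<in> J then (if f i = g i then 1 else 0) else 1))"
    by simp
  also have "\<dots> = (\<Prod>i\<in>I. \<Sum>a\<in>A. p a * (if i \<in> J then (if a = g i then 1 else 0) else 1))"
    using prod_sum_PiE[of I "\<lambda>_. A" "\<lambda>i a. p a * (if i \<in> J then (if a = g i then 1 else 0) else 1)"] assms
    by simp
  also have "\<dots> = (\<Prod>i\<in>I. if i \<in> J then p (g i) else 1)"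
  proof (rule prod.cong[OF refl])
    fix i assume "i \<in> I"
    show "(\<Sum>a\<in>A. p a * (if i \<in> J then (if a = g i then 1 else 0) else 1)) = (if i \<in> J then p (g i) else 1)"
    proof (cases "i \<in> J")
      case True
      then have "g i \<in> A" using assms by auto
      then show ?thesis using True assms(4) by (simp add: if_distrib[of "\<lambda>x. p _ * x"] sum.delta' cong: if_cong)
    qed (use assms in simp)
  qed
  also have "\<dots> = (\<Prod>i\<in>J. p (g i))"
    by (rule prod_if_subset[OF assms(1,2)])
  finally show ?thesis .
qed



lemma ln_chord:
  fixes x N :: real
  assumes "1 \<le> x" "x \<le> N" "1 < N"
  shows "ln N * (x - 1) / (N - 1) \<le> ln x"
proof -
  define t where "t = (x - 1) / (N - 1)"
  have t0: "t \<ge> 0" "t \<le> 1" using assms by (auto simp: t_def field_simps)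
  have e: "t * (N - 1) = x - 1" using assms by (simp add: t_def)
  have "(1 - t) *\<^sub>R 1 + t *\<^sub>R N = 1 + t * (N - 1)" by (simp add: algebra_simps)
  then have "(1 - t) *\<^sub>R 1 + t *\<^sub>R N = x" using e by simp
  moreover have "ln ((1 - t) *\<^sub>R 1 + t *\<^sub>R N) \<ge> (1 - t) * ln 1 + t * ln N"
    by (rule concave_onD[OF ln_concave]) (use t0 assms in auto)
  ultimately show ?thesis by (simp add: t_def mult.commute)
qed

lemma pointwise:
  fixes q :: real and L :: nat
  assumes "0 \<le> q" "q \<le> 1" "1 \<le> L"
  shows "min 1 (2^L * q) \<le> 2^L * (if q = 0 then 0 else q * log 2 (1/q)) / L + q"
proof -
  define N :: real where "N = 2^L"
  have N1: "N > 1" using assms by (simp add: N_def)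
  have logN: "log 2 N = L" by (simp add: N_def)
  show ?thesis
  proof (cases "q = 0")
    case True then show ?thesis by simp
  next
    case False
    then have qp: "q > 0" using assms by simp
    show ?thesis
    proof (cases "q \<le> 1 / N")
      case True
      then have "1/q \<ge> N" using qp N1 by (simp add: field_simps)
      then have "log 2 (1/q) \<ge> L" proof -
        have "log 2 N \<le> log 2 (1/q)" using \<open>1/q \<ge> N\<close> N1 qp by (subst log_le_cancel_iff) auto
        then show ?thesis using logN by simp
      qed
      then have "N * q * 1 \<le> N * q * (log 2 (1/q) / L)"
        using qp N1 assms by (intro mult_left_mono) (auto simp: field_simps)
      then show ?thesis using False qp unfolding N_def[symmetric] by (simp add: field_simps)
    next
      case False2: False
      define x where "x = 1/q"
      have x1: "1 \<le> x" "x \<le> N" using qp assms False2 N1 by (auto simp: x_def field_simps)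
      have "ln N * (x - 1) / (N - 1) \<le> ln x" by (rule ln_chord) (use x1 N1 in auto)
      then have "log 2 N * (x - 1) / (N - 1) \<le> log 2 x"
      proof -
        have "log 2 N * (x - 1) / (N - 1) = (ln N * (x - 1) / (N - 1)) / ln 2" by (simp add: log_def)
        also have "\<dots> \<le> ln x / ln 2" by (rule divide_right_mono) (use \<open>ln N * (x - 1) / (N - 1) \<le> ln x\<close> in auto)
        finally show ?thesis by (simp add: log_def)
      qed
      then have A: "L * (x - 1) / (N - 1) \<le> log 2 x" using logN by simp
      have "1 - q \<le> N * (1 - q) / (N - 1)" using N1 assms by (simp add: field_simps)
      also have "N * (1-q) / (N-1) = N * q * (L * (x - 1) / (N - 1)) / L"
        using qp assms N1 by (simp add: x_def field_simps)
      also have "\<dots> \<le> N * q * log 2 x / L"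
        using A qp N1 assms by (intro divide_right_mono mult_left_mono) auto
      finally have "1 \<le> N * (q * log 2 (1/q)) / L + q" by (simp add: x_def)
      then show ?thesis using \<open>q \<noteq> 0\<close> unfolding N_def[symmetric] by simp
    qed
  qed
qed



lemma log_prod_inv:
  assumes "finite I" "\<And>i. i \<in> I \<Longrightarrow> (f i::real) > 0"
  shows "log 2 (1 / prod f I) = (\<Sum>i\<in>I. log 2 (1 / f i))"
proof -
  have "ln (prod f I) = (\<Sum>i\<in>I. ln (f i))" using assms by (intro ln_prod) (auto dest!: assms(2))
  moreover have "prod f I > 0" using assms by (intro prod_pos) auto
  ultimately have "log 2 (1 / prod f I) = - (\<Sum>i\<in>I. ln (f i)) / ln 2"
    by (simp add: log_def ln_div)
  also have "\<dots> = (\<Sum>i\<in>I. - ln (f i) / ln 2)"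
    by (simp add: sum_divide_distrib[symmetric] sum_negf)
  also have "\<dots> = (\<Sum>i\<in>I. log 2 (1 / f i))"
    by (rule sum.cong[OF refl]) (simp add: log_def ln_div assms(2))
  finally show ?thesis .
qed

lemma entropy_prod:
  fixes M :: nat
  assumes "finite Hops" "\<And>x. x \<in> Hops \<Longrightarrow> p x \<ge> 0" "(\<Sum>x\<in>Hops. p x) = (1::real)"
  shows "(\<Sum>s\<in>{..<M} \<rightarrow>\<^sub>E Hops. (if (\<Prod>i<M. p (s i)) = 0 then 0
           else (\<Prod>i<M. p (s i)) * log 2 (1 / (\<Prod>i<M. p (s i)))))
         = real M * entropy Hops p"
proof -
  define \<phi> where "\<phi> a = (if p a = 0 then 0 else log 2 (1 / p a))" for a
  have tm: "(if (\<Prod>i<M. p (s i)) = 0 then 0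
           else (\<Prod>i<M. p (s i)) * log 2 (1 / (\<Prod>i<M. p (s i))))
        = (\<Sum>k<M. (\<Prod>i<M. p (s i)) * \<phi> (s k))" if s: "s \<in> {..<M} \<rightarrow>\<^sub>E Hops" for s
  proof (cases "(\<Prod>i<M. p (s i)) = 0")
    case True
    show ?thesis by (simp only: True if_True) simp
  next
    case False
    have pos: "p (s i) > 0" if "i < M" for i
    proof -
      have "p (s i) \<ge> 0" using s that assms(2) by auto
      moreover have "p (s i) \<noteq> 0" 
      proof
        assume "p (s i) = 0"
        then have "(\<Prod>i<M. p (s i)) = 0" using that by (intro prod_zero) auto
        with False show False by simp
      qed
      ultimately show ?thesis by simp
    qed
    have "log 2 (1 / (\<Prod>i<M. p (s i))) = (\<Sum>k<M. \<phi> (s k))"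
      using pos by (subst log_prod_inv) (auto simp: \<phi>_def intro!: sum.cong dest!: pos)
    then show ?thesis using False by (simp add: sum_distrib_left)
  qed
  have "(\<Sum>s\<in>{..<M} \<rightarrow>\<^sub>E Hops. (if (\<Prod>i<M. p (s i)) = 0 then 0
           else (\<Prod>i<M. p (s i)) * log 2 (1 / (\<Prod>i<M. p (s i)))))
      = (\<Sum>s\<in>{..<M} \<rightarrow>\<^sub>E Hops. \<Sum>k<M. (\<Prod>i<M. p (s i)) * \<phi> (s k))"
    using tm by (rule sum.cong[OF refl])
  also have "\<dots> = (\<Sum>k<M. \<Sum>s\<in>{..<M} \<rightarrow>\<^sub>E Hops. (\<Prod>i<M. p (s i)) * \<phi> (s k))"
    by (rule sum.swap)
  also have "\<dots> = (\<Sum>k<M. entropy Hops p)"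
  proof (rule sum.cong[OF refl])
    fix k assume k: "k \<in> {..<M}"
    have "(\<Sum>s\<in>{..<M} \<rightarrow>\<^sub>E Hops. (\<Prod>i<M. p (s i)) * \<phi> (s k))
        = (\<Sum>s\<in>{..<M} \<rightarrow>\<^sub>E Hops. \<Prod>i<M. (if i = k then p (s i) * \<phi> (s i) else p (s i)))"
    proof (rule sum.cong[OF refl])
      fix s
      have "(\<Prod>i<M. (if i = k then p (s i) * \<phi> (s i) else p (s i)))
          = (\<Prod>i<M. p (s i) * (if i \<in> {k} then \<phi> (s i) else 1))"
        by (rule prod.cong) auto
      also have "\<dots> = (\<Prod>i<M. p (s i)) * (\<Prod>i<M. if i \<in> {k} then \<phi> (s i) else 1)"
        by (rule prod.distrib)
      also have "(\<Prod>i<M. if i \<in> {k} then \<phi> (s i) else 1) = (\<Prod>i\<in>{k}. \<phi> (s i))"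
        by (rule prod_if_subset) (use k in auto)
      finally show "(\<Prod>i<M. p (s i)) * \<phi> (s k) = (\<Prod>i<M. (if i = k then p (s i) * \<phi> (s i) else p (s i)))"
        by simp
    qed
    also have "\<dots> = (\<Prod>i<M. \<Sum>a\<in>Hops. (if i = k then p a * \<phi> a else p a))"
      using prod_sum_PiE[of "{..<M}" "\<lambda>_. Hops" "\<lambda>i a. (if i = k then p a * \<phi> a else p a)"] assms(1)
      by simp
    also have "\<dots> = (\<Prod>i<M. if i \<in> {k} then (\<Sum>a\<in>Hops. p a * \<phi> a) else 1)"
      by (rule prod.cong) (auto simp: assms(3))
    also have "\<dots> = (\<Sum>a\<in>Hops. p a * \<phi> a)"
      using prod_if_subset[of "{..<M}" "{k}" "\<lambda>_. (\<Sum>a\<in>Hops. p a * \<phi> a)"] k by simp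
    also have "\<dots> = entropy Hops p" unfolding entropy_def \<phi>_def by (rule sum.cong) auto
    finally show "(\<Sum>s\<in>{..<M} \<rightarrow>\<^sub>E Hops. (\<Prod>i<M. p (s i)) * \<phi> (s k)) = entropy Hops p" .
  qed
  also have "\<dots> = real M * entropy Hops p" by simp
  finally show ?thesis .
qed



lemma exp_le:
  fixes P X :: "'b \<Rightarrow> real"
  assumes "finite \<Omega>" "\<And>x. x \<in> \<Omega> \<Longrightarrow> P x \<ge> 0" "(\<Sum>x\<in>\<Omega>. P x) = 1"
    "\<And>x. x \<in> \<Omega> \<Longrightarrow> X x \<le> c"
  shows "(\<Sum>x\<in>\<Omega>. P x * X x) \<le> c"
proof -
  have "(\<Sum>x\<in>\<Omega>. P x * X x) \<le> (\<Sum>x\<in>\<Omega>. P x * c)"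
    by (rule sum_mono) (use assms in \<open>auto intro: mult_left_mono\<close>)
  also have "\<dots> = c" using assms(3) by (simp add: sum_distrib_right[symmetric])
  finally show ?thesis .
qed

lemma exp_min_le:
  fixes P X :: "'b \<Rightarrow> real"
  assumes "finite \<Omega>" "\<And>x. x \<in> \<Omega> \<Longrightarrow> P x \<ge> 0" "(\<Sum>x\<in>\<Omega>. P x) = 1"
  shows "(\<Sum>x\<in>\<Omega>. P x * min 1 (X x)) \<le> min 1 (\<Sum>x\<in>\<Omega>. P x * X x)"
proof -
  have "(\<Sum>x\<in>\<Omega>. P x * min 1 (X x)) \<le> 1"
    by (rule exp_le) (use assms in auto)
  moreover have "(\<Sum>x\<in>\<Omega>. P x * min 1 (X x)) \<le> (\<Sum>x\<in>\<Omega>. P x * X x)"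
    by (rule sum_mono) (use assms in \<open>auto intro: mult_left_mono\<close>)
  ultimately show ?thesis by simp
qed

theorem lemma2:
  fixes h j :: nat and Hops :: "'a set" and p :: "'a \<Rightarrow> real"
  assumes "h \<ge> 1"
    and "finite Hops"
    and "\<And>x. x \<in> Hops \<Longrightarrow> p x \<ge> 0"
    and "(\<Sum>x\<in>Hops. p x) = 1"
    and "1 \<le> j" and "j \<le> h"
  shows "(j < h \<longrightarrow> expected_level_nodes h j Hops p \<le> entropy Hops p / real (h - j) * 2^h + 3)
       \<and> expected_level_nodes h j Hops p \<le> 2^(h - j)
       \<and> expected_level_nodes h j Hops p \<le> real (card Hops) ^ (2^j)"
proof -
  define N :: nat where "N = 2^(h-j)"
  define M :: nat where "M = 2^j"
  have NM: "N * M = 2^h" using assms(6) by (simp add: N_def M_def power_add[symmetric])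
  define \<Omega> where "\<Omega> = {..<(2::nat)^h} \<rightarrow>\<^sub>E Hops"
  define S where "S = {..<M} \<rightarrow>\<^sub>E Hops"
  define P where "P lbl = labeling_prob h p lbl" for lbl
  define sf where "sf lbl m = (\<lambda>k\<in>{..<M}. lbl (m * M + k))" for lbl :: "nat \<Rightarrow> 'a" and m
  have fO: "finite \<Omega>" "finite S" unfolding \<Omega>_def S_def using assms(2) by (auto intro: finite_PiE)
  have P0: "P lbl \<ge> 0" if "lbl \<in> \<Omega>" for lbl
    using that assms(3) unfolding P_def labeling_prob_def \<Omega>_def by (auto intro!: prod_nonneg)
  have P1: "(\<Sum>lbl\<in>\<Omega>. P lbl) = 1"
    unfolding P_def labeling_prob_def \<Omega>_def by (rule sum_PiE_prob) (use assms in auto)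
  have E: "expected_level_nodes h j Hops p = (\<Sum>lbl\<in>\<Omega>. P lbl * real (card (folded_level_nodes h j lbl)))"
    unfolding expected_level_nodes_def \<Omega>_def P_def ..
  have idx: "m * M + k < 2^h" if "m < N" "k < M" for m k
  proof -
    have "m * M + k < (m + 1) * M" using that by simp
    also have "\<dots> \<le> N * M" using that by (intro mult_right_mono) auto
    finally show ?thesis using NM by simp
  qed
  have sfS: "sf lbl m \<in> S" if "lbl \<in> \<Omega>" "m < N" for lbl m
    using that idx unfolding sf_def S_def \<Omega>_def by auto
  have sub: "subtrie_string j lbl m = map (sf lbl m) [0..<M]" for lbl m
    unfolding subtrie_string_def sf_def M_def
    by (rule nth_equalityI) (auto simp: algebra_simps)
  have fold_le: "card (folded_level_nodes h j lbl) \<le> card (sf lbl ` {..<N})" for lbl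
  proof -
    have "folded_level_nodes h j lbl = (\<lambda>f. map f [0..<M]) ` (sf lbl ` {..<N})"
      unfolding folded_level_nodes_def N_def using sub by (auto simp: image_image)
    then show ?thesis by (simp add: card_image_le)
  qed
  have b2: "expected_level_nodes h j Hops p \<le> 2^(h-j)"
    unfolding E
  proof (rule exp_le[OF fO(1) P0 P1])
    fix lbl :: "nat \<Rightarrow> 'a"
    have "card (folded_level_nodes h j lbl) \<le> N"
      using fold_le[of lbl] card_image_le[of "{..<N}" "sf lbl"] by simp
    then show "real (card (folded_level_nodes h j lbl)) \<le> 2^(h-j)"
      unfolding N_def by (metis of_nat_le_iff of_nat_numeral of_nat_power)
  qed
  have b3: "expected_level_nodes h j Hops p \<le> real (card Hops) ^ (2^j)"
    unfolding E
  proof (rule exp_le[OF fO(1) P0 P1])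
    fix lbl assume "lbl \<in> \<Omega>"
    then have "sf lbl ` {..<N} \<subseteq> S" using sfS by auto
    then have "card (sf lbl ` {..<N}) \<le> card S" using fO(2) by (rule card_mono[rotated])
    also have "card S = card Hops ^ M" unfolding S_def by (simp add: card_PiE)
    finally have "card (folded_level_nodes h j lbl) \<le> card Hops ^ M" using fold_le[of lbl] by simp
    then show "real (card (folded_level_nodes h j lbl)) \<le> real (card Hops) ^ (2^j)"
      unfolding M_def by (metis of_nat_le_iff of_nat_power)
  qed
  have b1: "expected_level_nodes h j Hops p \<le> entropy Hops p / real (h - j) * 2^h + 3" if jh: "j < h"
proof -
    define L where "L = h - j"
    have L1: "1 \<le> L" using jh by (simp add: L_def)
    have NL: "N = 2^L" by (simp add: N_def L_def)
    define q where "q s = (\<Prod>k<M. p (s k))" for s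
    define X where "X s lbl = (\<Sum>m<N. of_bool (sf lbl m = s) :: real)" for s lbl
    have p1: "p x \<le> 1" if "x \<in> Hops" for x
      using member_le_sum[of x Hops p] assms(2,3,4) that by auto
    have q01: "0 \<le> q s" "q s \<le> 1" if "s \<in> S" for s
      using that p1 assms(3) unfolding q_def S_def by (auto intro!: prod_nonneg prod_le_1)
    have card_eq: "real (card (sf lbl ` {..<N})) = (\<Sum>s\<in>S. of_bool (s \<in> sf lbl ` {..<N}))"
      if "lbl \<in> \<Omega>" for lbl
    proof -
      have "S \<inter> {s. s \<in> sf lbl ` {..<N}} = sf lbl ` {..<N}" using sfS that by auto
      then show ?thesis using fO(2) by simp
    qed
    have ind_le: "of_bool (s \<in> sf lbl ` {..<N}) \<le> min 1 (X s lbl)" for s lbl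
    proof (cases "s \<in> sf lbl ` {..<N}")
      case True
      then obtain m where m: "m < N" "sf lbl m = s" by auto
      have "(1::real) = of_bool (sf lbl m = s)" using m by simp
      also have "\<dots> \<le> X s lbl" unfolding X_def
        by (rule member_le_sum) (use m in auto)
      finally show ?thesis using True by simp
    next
      case False
      have "0 \<le> X s lbl" unfolding X_def by (rule sum_nonneg) simp
      then show ?thesis using False by simp
    qed
    have marg: "(\<Sum>lbl\<in>\<Omega>. P lbl * of_bool (sf lbl m = s)) = q s" if s: "s \<in> S" and m: "m < N" for s m
    proof -
      define J where "J = (\<lambda>k. m * M + k) ` {..<M}"
      define g where "g i = s (i - m * M)" for i
      have eqv: "of_bool (sf lbl m = s) = (if \<forall>i\<in>J. lbl i = g i then 1 else (0::real))" for lbl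
      proof -
        have "(sf lbl m = s) = (\<forall>k<M. lbl (m * M + k) = s k)"
        proof
          assume "sf lbl m = s"
          then show "\<forall>k<M. lbl (m * M + k) = s k" unfolding sf_def by (auto dest: fun_cong)
        next
          assume A: "\<forall>k<M. lbl (m * M + k) = s k"
          show "sf lbl m = s"
          proof
            fix k show "sf lbl m k = s k"
              using A s unfolding sf_def S_def by (cases "k < M") (auto simp: PiE_def extensional_def)
          qed
        qed
        also have "\<dots> = (\<forall>i\<in>J. lbl i = g i)" unfolding J_def g_def by auto
        finally show ?thesis by simp
      qed
      have "(\<Sum>lbl\<in>\<Omega>. P lbl * of_bool (sf lbl m = s))
          = (\<Sum>lbl\<in>{..<2^h} \<rightarrow>\<^sub>E Hops. (\<Prod>i\<in>{..<2^h}. p (lbl i)) * (if \<forall>i\<in>J. lbl i = g i then 1 else 0))"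
        unfolding \<Omega>_def P_def labeling_prob_def eqv ..
      also have "\<dots> = (\<Prod>i\<in>J. p (g i))"
      proof (rule marginal[of "{..<2^h}" J g Hops p])
        show "J \<subseteq> {..<2^h}" unfolding J_def using idx m by auto
        show "g ` J \<subseteq> Hops"
        proof
          fix y assume "y \<in> g ` J"
          then obtain k where k: "k < M" "y = s k" unfolding J_def g_def by auto
          then show "y \<in> Hops" using s unfolding S_def by auto
        qed
        show "finite Hops" by (rule assms(2))
        show "(\<Sum>a\<in>Hops. p a) = 1" by (rule assms(4))
      qed simp
      also have "\<dots> = (\<Prod>k<M. p (g (m * M + k)))" unfolding J_def
        by (subst prod.reindex) (auto simp: inj_on_def)
      also have "\<dots> = q s" unfolding q_def g_def by simp
      finally show ?thesis .
    qed
    have "expected_level_nodes h j Hops p \<le> (\<Sum>lbl\<in>\<Omega>. P lbl * (\<Sum>s\<in>S. min 1 (X s lbl)))"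
      unfolding E
    proof (rule sum_mono)
      fix lbl assume lbl: "lbl \<in> \<Omega>"
      have "real (card (folded_level_nodes h j lbl)) \<le> real (card (sf lbl ` {..<N}))"
        using fold_le by simp
      also have "\<dots> \<le> (\<Sum>s\<in>S. min 1 (X s lbl))" unfolding card_eq[OF lbl]
        by (rule sum_mono) (rule ind_le)
      finally have c: "real (card (folded_level_nodes h j lbl)) \<le> (\<Sum>s\<in>S. min 1 (X s lbl))" .
      show "P lbl * real (card (folded_level_nodes h j lbl)) \<le> P lbl * (\<Sum>s\<in>S. min 1 (X s lbl))"
        by (rule mult_left_mono[OF c P0[OF lbl]])
    qed
    also have "\<dots> = (\<Sum>s\<in>S. \<Sum>lbl\<in>\<Omega>. P lbl * min 1 (X s lbl))"
      unfolding sum_distrib_left by (rule sum.swap)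
    also have "\<dots> \<le> (\<Sum>s\<in>S. min 1 (\<Sum>lbl\<in>\<Omega>. P lbl * X s lbl))"
      by (rule sum_mono) (rule exp_min_le[OF fO(1) P0 P1])
    also have "\<dots> = (\<Sum>s\<in>S. min 1 (2^L * q s))"
    proof (rule sum.cong[OF refl])
      fix s assume s: "s \<in> S"
      have "(\<Sum>lbl\<in>\<Omega>. P lbl * X s lbl) = (\<Sum>m<N. \<Sum>lbl\<in>\<Omega>. P lbl * of_bool (sf lbl m = s))"
        unfolding X_def sum_distrib_left by (rule sum.swap)
      also have "\<dots> = (\<Sum>m<N. q s)" using marg[OF s] by simp
      also have "\<dots> = 2^L * q s" by (simp add: NL)
      finally show "min 1 (\<Sum>lbl\<in>\<Omega>. P lbl * X s lbl) = min 1 (2^L * q s)" by simp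
    qed
    also have "\<dots> \<le> (\<Sum>s\<in>S. 2^L * (if q s = 0 then 0 else q s * log 2 (1 / q s)) / L + q s)"
    proof (rule sum_mono)
      fix s assume "s \<in> S"
      then show "min 1 (2^L * q s) \<le> 2^L * (if q s = 0 then 0 else q s * log 2 (1 / q s)) / L + q s"
        using q01 L1 by (intro pointwise) auto
    qed
    also have "\<dots> = 2^L / L * (\<Sum>s\<in>S. (if q s = 0 then 0 else q s * log 2 (1 / q s))) + (\<Sum>s\<in>S. q s)"
      unfolding sum.distrib by (simp only: sum_distrib_left sum_divide_distrib times_divide_eq_left times_divide_eq_right)
    also have "(\<Sum>s\<in>S. (if q s = 0 then 0 else q s * log 2 (1 / q s))) = real M * entropy Hops p"
      unfolding S_def q_def by (rule entropy_prod) (use assms in auto)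
    also have "(\<Sum>s\<in>S. q s) = 1"
      unfolding S_def q_def by (rule sum_PiE_prob) (use assms in auto)
    also have "2^L / real L * (real M * entropy Hops p) = entropy Hops p / real (h - j) * 2^h"
    proof -
      have "(2::real)^L * real M = 2^L * 2^j" by (simp add: M_def)
      also have "\<dots> = 2^h" using assms(6) by (simp add: L_def power_add[symmetric])
      finally have "(2::real)^L * real M = 2^h" .
      then show ?thesis by (simp add: L_def field_simps)
    qed
    finally show ?thesis by simp
  qed
  show ?thesis using b1 b2 b3 by blast
qed

end
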